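(* Let $R$ be a commutative ring with identity and $M$ a non-zero comultiplication $R$-module such that $G'(M)$ is non-null. The following are equivalent: (i) $G'(M)$ is not connected; (ii) $|\mathrm{Min}(M)|=2$; (iii) $G'(M)$ is the disjoint union of two complete subgraphs $G'_1$ and $G'_2$ with no edges between them.
   Context: An $R$-module $M$ is a comultiplication module if for every submodule $N$ of $M$ there is an ideal $I$ of $R$ with $N=\mathrm{Ann}_M(I)$. A submodule $N$ of $M$ is large if $N\cap L\neq 0$ for every non-zero submodule $L$ of $M$. $\mathrm{Min}(M)$ is the set of minimal submodules of $M$. The large sum graph $G'(M)$ has as vertex set the set of all non-zero non-large submodules of $M$, and two distinct vertices $N,K$ are adjacent iff $N+K$ is non-large in $M$. *)

theory Defs
  imports "HOL-Algebra.Algebra"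
begin

definition ann_M :: "('a, 'c) ring_scheme \<Rightarrow> ('a, 'b, 'd) module_scheme \<Rightarrow> 'a set \<Rightarrow> 'b set" where
  "ann_M R M I = {m \<in> carrier M. \<forall>r \<in> I. r \<odot>\<^bsub>M\<^esub> m = \<zero>\<^bsub>M\<^esub>}"

definition comultiplication_module :: "('a, 'c) ring_scheme \<Rightarrow> ('a, 'b, 'd) module_scheme \<Rightarrow> bool" where
  "comultiplication_module R M \<longleftrightarrow>
     (\<forall>N. submodule N R M \<longrightarrow> (\<exists>I. ideal I R \<and> N = ann_M R M I))"

definition large_submodule :: "('a, 'c) ring_scheme \<Rightarrow> ('a, 'b, 'd) module_scheme \<Rightarrow> 'b set \<Rightarrow> bool" where
  "large_submodule R M N \<longleftrightarrow> submodule N R M \<and>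
     (\<forall>L. submodule L R M \<and> L \<noteq> {\<zero>\<^bsub>M\<^esub>} \<longrightarrow> N \<inter> L \<noteq> {\<zero>\<^bsub>M\<^esub>})"

definition Min_sub :: "('a, 'c) ring_scheme \<Rightarrow> ('a, 'b, 'd) module_scheme \<Rightarrow> 'b set set" where
  "Min_sub R M = {N. submodule N R M \<and> N \<noteq> {\<zero>\<^bsub>M\<^esub>} \<and>
     (\<forall>L. submodule L R M \<and> L \<subseteq> N \<longrightarrow> L = {\<zero>\<^bsub>M\<^esub>} \<or> L = N)}"

definition lsg_vertices :: "('a, 'c) ring_scheme \<Rightarrow> ('a, 'b, 'd) module_scheme \<Rightarrow> 'b set set" where
  "lsg_vertices R M = {N. submodule N R M \<and> N \<noteq> {\<zero>\<^bsub>M\<^esub>} \<and> \<not> large_submodule R M N}"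

definition lsg_adj :: "('a, 'c) ring_scheme \<Rightarrow> ('a, 'b, 'd) module_scheme \<Rightarrow> 'b set \<Rightarrow> 'b set \<Rightarrow> bool" where
  "lsg_adj R M N K \<longleftrightarrow> N \<in> lsg_vertices R M \<and> K \<in> lsg_vertices R M \<and> N \<noteq> K \<and>
     \<not> large_submodule R M (N <+>\<^bsub>M\<^esub> K)"

definition graph_connected :: "'v set \<Rightarrow> ('v \<Rightarrow> 'v \<Rightarrow> bool) \<Rightarrow> bool" where
  "graph_connected V E \<longleftrightarrow> (\<forall>x \<in> V. \<forall>y \<in> V. (x, y) \<in> {(u, v). E u v}\<^sup>*)"

end

theory Submission
  imports Defs
begin


definition annR :: "('a, 'c) ring_scheme \<Rightarrow> ('a, 'b, 'd) module_scheme \<Rightarrow> 'b set \<Rightarrow> 'a set" where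
  "annR R M N = {r \<in> carrier R. \<forall>x \<in> N. r \<odot>\<^bsub>M\<^esub> x = \<zero>\<^bsub>M\<^esub>}"

definition cyc :: "('a, 'c) ring_scheme \<Rightarrow> ('a, 'b, 'd) module_scheme \<Rightarrow> 'b \<Rightarrow> 'b set" where
  "cyc R M x = {a \<odot>\<^bsub>M\<^esub> x | a. a \<in> carrier R}"

lemma (in cring) idealI':
  assumes "J \<subseteq> carrier R" "\<zero> \<in> J" "\<And>a b. a \<in> J \<Longrightarrow> b \<in> J \<Longrightarrow> a \<oplus> b \<in> J"
    "\<And>a x. a \<in> J \<Longrightarrow> x \<in> carrier R \<Longrightarrow> x \<otimes> a \<in> J"
  shows "ideal J R"
proof (rule idealI[OF ring_axioms])
  have inv: "\<ominus> a \<in> J" if a: "a \<in> J" for a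
  proof -
    have "(\<ominus> \<one>) \<otimes> a = \<ominus> a" using a assms(1) by (simp add: l_minus subsetD)
    moreover have "(\<ominus> \<one>) \<otimes> a \<in> J" using assms(4)[OF a] by simp
    ultimately show ?thesis by simp
  qed
  show "subgroup J (add_monoid R)"
    by (rule add.subgroupI) (use assms(1,2,3) inv in \<open>auto simp: a_inv_def\<close>)
next
  fix a x assume "a \<in> J" "x \<in> carrier R"
  thus "x \<otimes> a \<in> J" using assms(4) by blast
  thus "a \<otimes> x \<in> J" using \<open>a \<in> J\<close> \<open>x \<in> carrier R\<close> assms(1) m_comm by (metis subsetD)
qed

context module
begin

lemma submoduleI':
  assumes "H \<subseteq> carrier M" "\<zero>\<^bsub>M\<^esub> \<in> H" "\<And>a b. a \<in> H \<Longrightarrow> b \<in> H \<Longrightarrow> a \<oplus>\<^bsub>M\<^esub> b \<in> H"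
    "\<And>a x. a \<in> carrier R \<Longrightarrow> x \<in> H \<Longrightarrow> a \<odot>\<^bsub>M\<^esub> x \<in> H"
  shows "submodule H R M"
proof (rule submoduleI[OF assms(1,2)])
  fix a assume a: "a \<in> H"
  have "(\<ominus> \<one>) \<odot>\<^bsub>M\<^esub> a = \<ominus>\<^bsub>M\<^esub> a" using a assms(1) smult_l_minus[of \<one> a] by (simp add: subsetD)
  moreover have "(\<ominus> \<one>) \<odot>\<^bsub>M\<^esub> a \<in> H" using assms(4) a by simp
  ultimately show "\<ominus>\<^bsub>M\<^esub> a \<in> H" by simp
qed (use assms in auto)

lemma cyc_sub: assumes "x \<in> carrier M" shows "submodule (cyc R M x) R M"
proof (rule submoduleI')
  show "cyc R M x \<subseteq> carrier M" using assms by (auto simp: cyc_def)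
  show "\<zero>\<^bsub>M\<^esub> \<in> cyc R M x" unfolding cyc_def using assms by (intro CollectI exI[of _ \<zero>]) simp
  fix a b assume "a \<in> cyc R M x" "b \<in> cyc R M x"
  then obtain r s where "r \<in> carrier R" "s \<in> carrier R" "a = r \<odot>\<^bsub>M\<^esub> x" "b = s \<odot>\<^bsub>M\<^esub> x" by (auto simp: cyc_def)
  thus "a \<oplus>\<^bsub>M\<^esub> b \<in> cyc R M x" unfolding cyc_def using assms
    by (intro CollectI exI[of _ "r \<oplus> s"]) (simp add: smult_l_distr)
next
  fix a y assume a: "a \<in> carrier R" and "y \<in> cyc R M x"
  then obtain r where "r \<in> carrier R" "y = r \<odot>\<^bsub>M\<^esub> x" by (auto simp: cyc_def)
  thus "a \<odot>\<^bsub>M\<^esub> y \<in> cyc R M x" unfolding cyc_def using assms a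
    by (intro CollectI exI[of _ "a \<otimes> r"]) (simp add: smult_assoc1)
qed

lemma cyc_self: "x \<in> carrier M \<Longrightarrow> x \<in> cyc R M x"
  unfolding cyc_def by (intro CollectI exI[of _ \<one>]) simp

lemma cyc_le: "submodule H R M \<Longrightarrow> x \<in> H \<Longrightarrow> cyc R M x \<subseteq> H"
  unfolding cyc_def using submodule.smult_closed by fastforce

lemma sub_carrier: "submodule H R M \<Longrightarrow> H \<subseteq> carrier M"
  using submoduleE(1) by blast

lemma sub_zero: "submodule H R M \<Longrightarrow> \<zero>\<^bsub>M\<^esub> \<in> H"
  by (metis additive_subgroup.zero_closed additive_subgroup_def submodule.axioms(1))

lemma sub_Int: "submodule N R M \<Longrightarrow> submodule K R M \<Longrightarrow> submodule (N \<inter> K) R M"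
  apply (rule submoduleI')
     apply (use sub_carrier in blast)
    apply (simp add: sub_zero)
   apply (meson IntD1 IntD2 IntI submoduleE(5))
  by (simp add: submodule.smult_closed)

lemma annR_ideal: assumes "N \<subseteq> carrier M" shows "ideal (annR R M N) R"
proof (rule idealI')
  show "annR R M N \<subseteq> carrier R" by (auto simp: annR_def)
  show "\<zero> \<in> annR R M N" using assms by (auto simp: annR_def)
  fix a b assume "a \<in> annR R M N" "b \<in> annR R M N"
  thus "a \<oplus> b \<in> annR R M N" using assms by (auto simp: annR_def smult_l_distr)
next
  fix a x assume "a \<in> annR R M N" "x \<in> carrier R"
  thus "x \<otimes> a \<in> annR R M N" using assms by (auto simp: annR_def smult_assoc1)
qed

lemma ideal_add: "ideal I R \<Longrightarrow> a \<in> I \<Longrightarrow> b \<in> I \<Longrightarrow> a \<oplus> b \<in> I"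
  by (meson additive_subgroup.a_closed ideal.axioms(1))
lemma ideal_sub: "ideal I R \<Longrightarrow> I \<subseteq> carrier R"
  by (meson additive_subgroup.a_subset ideal.axioms(1))
lemma ideal_mul: "ideal I R \<Longrightarrow> a \<in> I \<Longrightarrow> x \<in> carrier R \<Longrightarrow> x \<otimes> a \<in> I"
  by (meson ideal.I_l_closed)

lemma sa_mem: "z \<in> N <+>\<^bsub>M\<^esub> K \<longleftrightarrow> (\<exists>h\<in>N. \<exists>k\<in>K. z = h \<oplus>\<^bsub>M\<^esub> k)"
  by (simp add: set_add_def')

lemma sub_add: assumes N: "submodule N R M" and K: "submodule K R M"
  shows "submodule (N <+>\<^bsub>M\<^esub> K) R M"
proof (rule submoduleI')
  note Nc = sub_carrier[OF N] and Kc = sub_carrier[OF K]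
  show "N <+>\<^bsub>M\<^esub> K \<subseteq> carrier M"
  proof
    fix z assume "z \<in> N <+>\<^bsub>M\<^esub> K"
    then obtain h k where "h \<in> N" "k \<in> K" "z = h \<oplus>\<^bsub>M\<^esub> k" unfolding sa_mem by blast
    thus "z \<in> carrier M" using Nc Kc by (simp add: subsetD)
  qed
  show "\<zero>\<^bsub>M\<^esub> \<in> N <+>\<^bsub>M\<^esub> K" unfolding sa_mem
    using sub_zero[OF N] sub_zero[OF K] by (intro bexI[of _ "\<zero>\<^bsub>M\<^esub>"]) simp_all
  fix a b assume "a \<in> N <+>\<^bsub>M\<^esub> K" "b \<in> N <+>\<^bsub>M\<^esub> K"
  then obtain h k h' k' where hk: "h \<in> N" "k \<in> K" "a = h \<oplus>\<^bsub>M\<^esub> k" "h' \<in> N" "k' \<in> K" "b = h' \<oplus>\<^bsub>M\<^esub> k'"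
    unfolding sa_mem by blast
  have c: "h \<in> carrier M" "k \<in> carrier M" "h' \<in> carrier M" "k' \<in> carrier M"
    using hk Nc Kc by (simp_all add: subsetD)
  have "a \<oplus>\<^bsub>M\<^esub> b = (h \<oplus>\<^bsub>M\<^esub> h') \<oplus>\<^bsub>M\<^esub> (k \<oplus>\<^bsub>M\<^esub> k')"
    using c hk(3,6) by (simp add: M.a_ac)
  moreover have "h \<oplus>\<^bsub>M\<^esub> h' \<in> N" using submoduleE(5)[OF N hk(1) hk(4)] .
  moreover have "k \<oplus>\<^bsub>M\<^esub> k' \<in> K" using submoduleE(5)[OF K hk(2) hk(5)] .
  ultimately show "a \<oplus>\<^bsub>M\<^esub> b \<in> N <+>\<^bsub>M\<^esub> K" unfolding sa_mem by blast
next
  note Nc = sub_carrier[OF N] and Kc = sub_carrier[OF K]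
  fix a z assume a: "a \<in> carrier R" and "z \<in> N <+>\<^bsub>M\<^esub> K"
  then obtain h k where hk: "h \<in> N" "k \<in> K" "z = h \<oplus>\<^bsub>M\<^esub> k" unfolding sa_mem by blast
  have c: "h \<in> carrier M" "k \<in> carrier M" using hk Nc Kc by (simp_all add: subsetD)
  have "a \<odot>\<^bsub>M\<^esub> z = a \<odot>\<^bsub>M\<^esub> h \<oplus>\<^bsub>M\<^esub> a \<odot>\<^bsub>M\<^esub> k" using smult_r_distr[OF a c] hk(3) by simp
  moreover have "a \<odot>\<^bsub>M\<^esub> h \<in> N" using submodule.smult_closed[OF N a hk(1)] .
  moreover have "a \<odot>\<^bsub>M\<^esub> k \<in> K" using submodule.smult_closed[OF K a hk(2)] .
  ultimately show "a \<odot>\<^bsub>M\<^esub> z \<in> N <+>\<^bsub>M\<^esub> K" unfolding sa_mem by blast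
qed

lemma sub_add_le1: assumes N: "submodule N R M" and K: "submodule K R M"
  shows "N \<subseteq> N <+>\<^bsub>M\<^esub> K"
proof
  fix h assume h: "h \<in> N"
  have "h = h \<oplus>\<^bsub>M\<^esub> \<zero>\<^bsub>M\<^esub>" using h sub_carrier[OF N] by (simp add: subsetD)
  thus "h \<in> N <+>\<^bsub>M\<^esub> K" unfolding sa_mem using h sub_zero[OF K] by blast
qed

lemma sub_add_le2: assumes N: "submodule N R M" and K: "submodule K R M"
  shows "K \<subseteq> N <+>\<^bsub>M\<^esub> K"
proof
  fix k assume k: "k \<in> K"
  have "k = \<zero>\<^bsub>M\<^esub> \<oplus>\<^bsub>M\<^esub> k" using k sub_carrier[OF K] by (simp add: subsetD)
  thus "k \<in> N <+>\<^bsub>M\<^esub> K" unfolding sa_mem using k sub_zero[OF N] by blast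
qed

end

locale comod = module +
  assumes comult: "comultiplication_module R M"
begin

lemma ann_ann: assumes "submodule N R M" shows "ann_M R M (annR R M N) = N"
proof -
  obtain I where I: "ideal I R" "N = ann_M R M I" using comult assms unfolding comultiplication_module_def by blast
  have "I \<subseteq> annR R M N" using I ideal_sub by (auto simp: annR_def ann_M_def)
  hence "ann_M R M (annR R M N) \<subseteq> N" using I(2) by (auto simp: ann_M_def)
  moreover have "N \<subseteq> ann_M R M (annR R M N)" using sub_carrier[OF assms] by (auto simp: ann_M_def annR_def)
  ultimately show ?thesis by blast
qed

lemma rev: assumes "submodule N R M" "S \<subseteq> carrier M" "annR R M N \<subseteq> annR R M S" shows "S \<subseteq> N"
proof -
  have "S \<subseteq> ann_M R M (annR R M S)" using assms(2) by (auto simp: ann_M_def annR_def)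
  also have "\<dots> \<subseteq> ann_M R M (annR R M N)" using assms(3) by (auto simp: ann_M_def)
  finally show ?thesis using ann_ann[OF assms(1)] by simp
qed

lemma minE: assumes "S \<in> Min_sub R M"
  shows "submodule S R M" "S \<noteq> {\<zero>\<^bsub>M\<^esub>}" "\<And>L. submodule L R M \<Longrightarrow> L \<subseteq> S \<Longrightarrow> L = {\<zero>\<^bsub>M\<^esub>} \<or> L = S"
  using assms unfolding Min_sub_def by auto

lemma min_prime:
  assumes S: "S \<in> Min_sub R M" and r: "r \<in> carrier R" and s: "s \<in> carrier R"
    and rs: "r \<otimes> s \<in> annR R M S" and nr: "r \<notin> annR R M S"
  shows "s \<in> annR R M S"
proof -
  note Ssub = minE(1)[OF S]
  note Sc = sub_carrier[OF Ssub]
  have "\<not> (\<forall>x\<in>S. r \<odot>\<^bsub>M\<^esub> x = \<zero>\<^bsub>M\<^esub>)" using nr r by (simp add: annR_def)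
  then obtain y where y: "y \<in> S" "r \<odot>\<^bsub>M\<^esub> y \<noteq> \<zero>\<^bsub>M\<^esub>" by blast
  have yc: "y \<in> carrier M" using y(1) Sc by (rule subsetD[rotated])
  have ry: "r \<odot>\<^bsub>M\<^esub> y \<in> S" using submodule.smult_closed[OF Ssub r y(1)] .
  have "cyc R M (r \<odot>\<^bsub>M\<^esub> y) \<noteq> {\<zero>\<^bsub>M\<^esub>}" using cyc_self[OF smult_closed[OF r yc]] y(2) by blast
  hence eq: "cyc R M (r \<odot>\<^bsub>M\<^esub> y) = S"
    using minE(3)[OF S cyc_sub[OF smult_closed[OF r yc]] cyc_le[OF Ssub ry]] by blast
  have "s \<odot>\<^bsub>M\<^esub> z = \<zero>\<^bsub>M\<^esub>" if z: "z \<in> S" for z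
  proof -
    obtain a where a: "a \<in> carrier R" "z = a \<odot>\<^bsub>M\<^esub> (r \<odot>\<^bsub>M\<^esub> y)" proof -
      have "z \<in> cyc R M (r \<odot>\<^bsub>M\<^esub> y)" using z eq by simp
      thus ?thesis using that unfolding cyc_def by blast
    qed
    have ra: "r \<odot>\<^bsub>M\<^esub> y \<in> carrier M" using r yc by simp
    have "s \<odot>\<^bsub>M\<^esub> z = s \<odot>\<^bsub>M\<^esub> (a \<odot>\<^bsub>M\<^esub> (r \<odot>\<^bsub>M\<^esub> y))" using a(2) by simp
    also have "\<dots> = (s \<otimes> a) \<odot>\<^bsub>M\<^esub> (r \<odot>\<^bsub>M\<^esub> y)" using smult_assoc1[OF s a(1) ra] by simp
    also have "\<dots> = ((s \<otimes> a) \<otimes> r) \<odot>\<^bsub>M\<^esub> y" using smult_assoc1[OF m_closed[OF s a(1)] r yc] by simp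
    also have "(s \<otimes> a) \<otimes> r = a \<otimes> (r \<otimes> s)"
      using a(1) r s m_assoc m_comm m_closed by metis
    also have "(a \<otimes> (r \<otimes> s)) \<odot>\<^bsub>M\<^esub> y = a \<odot>\<^bsub>M\<^esub> ((r \<otimes> s) \<odot>\<^bsub>M\<^esub> y)" using smult_assoc1[OF a(1) m_closed[OF r s] yc] .
    also have "(r \<otimes> s) \<odot>\<^bsub>M\<^esub> y = \<zero>\<^bsub>M\<^esub>" using rs y unfolding annR_def by blast
    finally show ?thesis using a by simp
  qed
  thus ?thesis using s unfolding annR_def by blast
qed

lemma miss:
  assumes S: "S \<in> Min_sub R M" and N: "submodule N R M" and K: "submodule K R M"
    and nN: "\<not> S \<subseteq> N" and nK: "\<not> S \<subseteq> K"
  shows "\<not> S \<subseteq> N <+>\<^bsub>M\<^esub> K"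
proof
  assume sub: "S \<subseteq> N <+>\<^bsub>M\<^esub> K"
  note Sc = sub_carrier[OF minE(1)[OF S]]
  have "\<not> annR R M N \<subseteq> annR R M S" using rev[OF N Sc] nN by blast
  then obtain r where r: "r \<in> annR R M N" "r \<notin> annR R M S" by blast
  have "\<not> annR R M K \<subseteq> annR R M S" using rev[OF K Sc] nK by blast
  then obtain s where s: "s \<in> annR R M K" "s \<notin> annR R M S" by blast
  have rc: "r \<in> carrier R" and sc: "s \<in> carrier R" using r(1) s(1) by (simp_all add: annR_def)
  have nrs: "r \<otimes> s \<notin> annR R M S" using min_prime[OF S rc sc _ r(2)] s(2) by blast
  have "(r \<otimes> s) \<odot>\<^bsub>M\<^esub> z = \<zero>\<^bsub>M\<^esub>" if z: "z \<in> S" for z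
  proof -
    have "z \<in> N <+>\<^bsub>M\<^esub> K" using z sub by (rule subsetD[rotated])
    then obtain h k where hk: "h \<in> N" "k \<in> K" "z = h \<oplus>\<^bsub>M\<^esub> k" unfolding sa_mem by blast
    have hc: "h \<in> carrier M" using hk(1) sub_carrier[OF N] by (rule subsetD[rotated])
    have kc: "k \<in> carrier M" using hk(2) sub_carrier[OF K] by (rule subsetD[rotated])
    have rh: "r \<odot>\<^bsub>M\<^esub> h = \<zero>\<^bsub>M\<^esub>" using r(1) hk(1) by (simp add: annR_def)
    have sk: "s \<odot>\<^bsub>M\<^esub> k = \<zero>\<^bsub>M\<^esub>" using s(1) hk(2) by (simp add: annR_def)
    have "(r \<otimes> s) \<odot>\<^bsub>M\<^esub> h = (s \<otimes> r) \<odot>\<^bsub>M\<^esub> h" using rc sc m_comm by simp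
    also have "\<dots> = s \<odot>\<^bsub>M\<^esub> (r \<odot>\<^bsub>M\<^esub> h)" using smult_assoc1[OF sc rc hc] .
    also have "\<dots> = \<zero>\<^bsub>M\<^esub>" using rh sc by simp
    finally have 1: "(r \<otimes> s) \<odot>\<^bsub>M\<^esub> h = \<zero>\<^bsub>M\<^esub>" .
    have "(r \<otimes> s) \<odot>\<^bsub>M\<^esub> k = r \<odot>\<^bsub>M\<^esub> (s \<odot>\<^bsub>M\<^esub> k)" using smult_assoc1[OF rc sc kc] .
    also have "\<dots> = \<zero>\<^bsub>M\<^esub>" using sk rc by simp
    finally have 2: "(r \<otimes> s) \<odot>\<^bsub>M\<^esub> k = \<zero>\<^bsub>M\<^esub>" .
    have "(r \<otimes> s) \<odot>\<^bsub>M\<^esub> z = (r \<otimes> s) \<odot>\<^bsub>M\<^esub> h \<oplus>\<^bsub>M\<^esub> (r \<otimes> s) \<odot>\<^bsub>M\<^esub> k"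
      using smult_r_distr[OF m_closed[OF rc sc] hc kc] hk(3) by simp
    thus ?thesis using 1 2 by simp
  qed
  hence "r \<otimes> s \<in> annR R M S" using rc sc by (simp add: annR_def)
  thus False using nrs by contradiction
qed

lemma large_min: assumes L: "large_submodule R M N" and S: "S \<in> Min_sub R M" shows "S \<subseteq> N"
proof -
  have N: "submodule N R M" using L by (simp add: large_submodule_def)
  note Ss = minE(1)[OF S]
  have "N \<inter> S \<noteq> {\<zero>\<^bsub>M\<^esub>}" using L Ss minE(2)[OF S] unfolding large_submodule_def by blast
  hence "N \<inter> S = S" using minE(3)[OF S sub_Int[OF N Ss]] by blast
  thus ?thesis by blast
qed

lemma min_distinct: assumes S: "S \<in> Min_sub R M" and T: "T \<in> Min_sub R M" and "S \<noteq> T"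
  shows "\<not> S \<subseteq> T"
  using minE(3)[OF T minE(1)[OF S]] minE(2)[OF S] assms(3) by blast

lemma zero_not: assumes "submodule S R M" "S \<noteq> {\<zero>\<^bsub>M\<^esub>}" "S \<subseteq> Q" shows "Q \<noteq> {\<zero>\<^bsub>M\<^esub>}"
  using assms sub_zero[OF assms(1)] by blast

lemma exists_min: assumes N: "submodule N R M" and N0: "N \<noteq> {\<zero>\<^bsub>M\<^esub>}"
  shows "\<exists>S\<in>Min_sub R M. S \<subseteq> N"
proof -
  obtain x where x: "x \<in> N" "x \<noteq> \<zero>\<^bsub>M\<^esub>" using N0 sub_zero[OF N] by blast
  have xc: "x \<in> carrier M" using x(1) sub_carrier[OF N] by (rule subsetD[rotated])
  define I where "I = annR R M {x}"
  define F where "F = {J. ideal J R \<and> I \<subseteq> J \<and> \<one> \<notin> J}"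
  have Iid: "ideal I R" unfolding I_def using annR_ideal xc by simp
  have I1: "\<one> \<notin> I" using x(2) xc by (simp add: I_def annR_def)
  have IF: "I \<in> F" using Iid I1 by (simp add: F_def)
  have "\<exists>m\<in>F. \<forall>Y\<in>F. m \<subseteq> Y \<longrightarrow> Y = m"
  proof (rule subset_Zorn_nonempty)
    show "F \<noteq> {}" using IF by blast
    fix C assume C: "C \<noteq> {}" "subset.chain F C"
    have CF: "C \<subseteq> F" using C(2) unfolding pred_on.chain_def by blast
    have ch: "subset.chain {J. ideal J R} C" using C(2) unfolding pred_on.chain_def F_def by blast
    have "ideal (\<Union>C) R" using chain_Union_is_ideal[OF ch] C(1) by simp
    moreover have "I \<subseteq> \<Union>C" using C(1) CF unfolding F_def by blast
    moreover have "\<one> \<notin> \<Union>C" using CF unfolding F_def by blast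
    ultimately show "\<Union>C \<in> F" by (simp add: F_def)
  qed
  then obtain m where mF: "m \<in> F" and mmax: "\<And>Y. Y \<in> F \<Longrightarrow> m \<subseteq> Y \<Longrightarrow> Y = m" by blast
  have mi: "ideal m R" and Im: "I \<subseteq> m" and m1: "\<one> \<notin> m" using mF by (simp_all add: F_def)
  have mc: "m \<subseteq> carrier R" using ideal_sub[OF mi] .
  have "\<exists>s\<in>carrier R. s \<odot>\<^bsub>M\<^esub> x \<noteq> \<zero>\<^bsub>M\<^esub> \<and> (\<forall>r\<in>m. r \<odot>\<^bsub>M\<^esub> (s \<odot>\<^bsub>M\<^esub> x) = \<zero>\<^bsub>M\<^esub>)"
  proof (rule ccontr)
    assume H: "\<not> ?thesis"
    have H': "s \<odot>\<^bsub>M\<^esub> x = \<zero>\<^bsub>M\<^esub>" if "s \<in> carrier R" "\<forall>r\<in>m. r \<odot>\<^bsub>M\<^esub> (s \<odot>\<^bsub>M\<^esub> x) = \<zero>\<^bsub>M\<^esub>" for s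
      using H that by blast
    define P where "P = {r \<odot>\<^bsub>M\<^esub> x | r. r \<in> m}"
    have m0: "\<zero> \<in> m" using mi by (meson additive_subgroup.zero_closed ideal.axioms(1))
    have Psub: "submodule P R M"
    proof (rule submoduleI')
      show "P \<subseteq> carrier M" unfolding P_def using mc xc by auto
      show "\<zero>\<^bsub>M\<^esub> \<in> P" unfolding P_def using m0 xc by (intro CollectI exI[of _ \<zero>]) simp
      fix a b assume "a \<in> P" "b \<in> P"
      then obtain r1 r2 where "r1 \<in> m" "r2 \<in> m" "a = r1 \<odot>\<^bsub>M\<^esub> x" "b = r2 \<odot>\<^bsub>M\<^esub> x" unfolding P_def by blast
      moreover have "r1 \<in> carrier R" "r2 \<in> carrier R" using calculation(1,2) mc by (simp_all add: subsetD)
      ultimately show "a \<oplus>\<^bsub>M\<^esub> b \<in> P" unfolding P_def using xc ideal_add[OF mi]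
        by (intro CollectI exI[of _ "r1 \<oplus> r2"]) (simp add: smult_l_distr)
    next
      fix a z assume a: "a \<in> carrier R" and "z \<in> P"
      then obtain r where r: "r \<in> m" "z = r \<odot>\<^bsub>M\<^esub> x" unfolding P_def by blast
      have rc: "r \<in> carrier R" using r(1) mc by (rule subsetD[rotated])
      show "a \<odot>\<^bsub>M\<^esub> z \<in> P" unfolding P_def using r a xc ideal_mul[OF mi r(1) a]
        by (intro CollectI exI[of _ "a \<otimes> r"]) (simp add: smult_assoc1[OF a rc xc])
    qed
    obtain J where J: "ideal J R" "P = ann_M R M J" using comult Psub unfolding comultiplication_module_def by blast
    have "x \<in> ann_M R M J" unfolding ann_M_def
    proof (intro CollectI conjI ballI xc)
      fix j assume j: "j \<in> J"
      have jc: "j \<in> carrier R" using j ideal_sub[OF J(1)] by (rule subsetD[rotated])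
      show "j \<odot>\<^bsub>M\<^esub> x = \<zero>\<^bsub>M\<^esub>"
      proof (rule H'[OF jc], intro ballI)
        fix r assume r: "r \<in> m"
        have rc: "r \<in> carrier R" using r mc by (rule subsetD[rotated])
        have "r \<odot>\<^bsub>M\<^esub> x \<in> ann_M R M J" using r J(2) unfolding P_def by blast
        hence 0: "j \<odot>\<^bsub>M\<^esub> (r \<odot>\<^bsub>M\<^esub> x) = \<zero>\<^bsub>M\<^esub>" using j unfolding ann_M_def by blast
        have "r \<odot>\<^bsub>M\<^esub> (j \<odot>\<^bsub>M\<^esub> x) = (r \<otimes> j) \<odot>\<^bsub>M\<^esub> x" using smult_assoc1[OF rc jc xc] by simp
        also have "\<dots> = (j \<otimes> r) \<odot>\<^bsub>M\<^esub> x" using rc jc m_comm by simp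
        also have "\<dots> = j \<odot>\<^bsub>M\<^esub> (r \<odot>\<^bsub>M\<^esub> x)" using smult_assoc1[OF jc rc xc] .
        finally show "r \<odot>\<^bsub>M\<^esub> (j \<odot>\<^bsub>M\<^esub> x) = \<zero>\<^bsub>M\<^esub>" using 0 by simp
      qed
    qed
    hence "x \<in> P" using J(2) by simp
    then obtain r where r: "r \<in> m" "x = r \<odot>\<^bsub>M\<^esub> x" unfolding P_def by blast
    have rc: "r \<in> carrier R" using r(1) mc by (rule subsetD[rotated])
    have "(\<one> \<oplus> \<ominus> r) \<odot>\<^bsub>M\<^esub> x = \<one> \<odot>\<^bsub>M\<^esub> x \<oplus>\<^bsub>M\<^esub> (\<ominus> r) \<odot>\<^bsub>M\<^esub> x"
      using smult_l_distr[OF R.one_closed R.a_inv_closed[OF rc] xc] .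
    also have "\<dots> = x \<oplus>\<^bsub>M\<^esub> \<ominus>\<^bsub>M\<^esub> (r \<odot>\<^bsub>M\<^esub> x)" using smult_l_minus[OF rc xc] xc by simp
    also have "\<dots> = \<zero>\<^bsub>M\<^esub>" using r(2)[symmetric] xc by (simp add: M.r_neg)
    finally have "(\<one> \<oplus> \<ominus> r) \<in> I" unfolding I_def annR_def using rc by simp
    hence "(\<one> \<oplus> \<ominus> r) \<oplus> r \<in> m" using Im ideal_add[OF mi _ r(1)] by blast
    moreover have "(\<one> \<oplus> \<ominus> r) \<oplus> r = \<one>" using rc by (simp add: R.a_assoc R.l_neg)
    ultimately show False using m1 by simp
  qed
  then obtain s where s: "s \<in> carrier R" "s \<odot>\<^bsub>M\<^esub> x \<noteq> \<zero>\<^bsub>M\<^esub>" "\<forall>r\<in>m. r \<odot>\<^bsub>M\<^esub> (s \<odot>\<^bsub>M\<^esub> x) = \<zero>\<^bsub>M\<^esub>" by blast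
  define y where "y = s \<odot>\<^bsub>M\<^esub> x"
  have yc: "y \<in> carrier M" unfolding y_def using s(1) xc by simp
  have yN: "y \<in> N" unfolding y_def using submodule.smult_closed[OF N s(1) x(1)] .
  have y0: "y \<noteq> \<zero>\<^bsub>M\<^esub>" using s(2) by (simp add: y_def)
  have my: "\<And>r. r \<in> m \<Longrightarrow> r \<odot>\<^bsub>M\<^esub> y = \<zero>\<^bsub>M\<^esub>" using s(3) by (simp add: y_def)
  have "cyc R M y \<in> Min_sub R M"
    unfolding Min_sub_def
  proof (intro CollectI conjI allI impI)
    show "submodule (cyc R M y) R M" using cyc_sub[OF yc] .
    show "cyc R M y \<noteq> {\<zero>\<^bsub>M\<^esub>}" using cyc_self[OF yc] y0 by blast
    fix L assume L: "submodule L R M \<and> L \<subseteq> cyc R M y"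
    have Ls: "submodule L R M" using L by simp
    show "L = {\<zero>\<^bsub>M\<^esub>} \<or> L = cyc R M y"
    proof (cases "L = {\<zero>\<^bsub>M\<^esub>}")
      case True thus ?thesis by blast
    next
      case False
      then obtain z where z: "z \<in> L" "z \<noteq> \<zero>\<^bsub>M\<^esub>" using sub_zero[OF Ls] by blast
      have "z \<in> cyc R M y" using z(1) L by blast
      then obtain t where t: "t \<in> carrier R" "z = t \<odot>\<^bsub>M\<^esub> y" unfolding cyc_def by blast
      define J where "J = {a \<in> carrier R. a \<odot>\<^bsub>M\<^esub> y \<in> L}"
      have Jid: "ideal J R"
      proof (rule idealI')
        show "J \<subseteq> carrier R" unfolding J_def by blast
        show "\<zero> \<in> J" unfolding J_def using yc sub_zero[OF Ls] by simp
        fix a b assume "a \<in> J" "b \<in> J"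
        hence ab: "a \<in> carrier R" "b \<in> carrier R" "a \<odot>\<^bsub>M\<^esub> y \<in> L" "b \<odot>\<^bsub>M\<^esub> y \<in> L" unfolding J_def by blast+
        have "(a \<oplus> b) \<odot>\<^bsub>M\<^esub> y = a \<odot>\<^bsub>M\<^esub> y \<oplus>\<^bsub>M\<^esub> b \<odot>\<^bsub>M\<^esub> y" using smult_l_distr[OF ab(1,2) yc] .
        hence "(a \<oplus> b) \<odot>\<^bsub>M\<^esub> y \<in> L" using submoduleE(5)[OF Ls ab(3,4)] by simp
        thus "a \<oplus> b \<in> J" unfolding J_def using ab by simp
      next
        fix a c assume "a \<in> J" "c \<in> carrier R"
        hence ac: "a \<in> carrier R" "c \<in> carrier R" "a \<odot>\<^bsub>M\<^esub> y \<in> L" unfolding J_def by blast+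
        have "(c \<otimes> a) \<odot>\<^bsub>M\<^esub> y = c \<odot>\<^bsub>M\<^esub> (a \<odot>\<^bsub>M\<^esub> y)" using smult_assoc1[OF ac(2,1) yc] .
        hence "(c \<otimes> a) \<odot>\<^bsub>M\<^esub> y \<in> L" using submodule.smult_closed[OF Ls ac(2) ac(3)] by simp
        thus "c \<otimes> a \<in> J" unfolding J_def using ac by simp
      qed
      have mJ: "m \<subseteq> J"
      proof
        fix r assume r: "r \<in> m"
        have rc: "r \<in> carrier R" using r mc by (rule subsetD[rotated])
        show "r \<in> J" unfolding J_def using rc my[OF r] sub_zero[OF Ls] by simp
      qed
      have tJ: "t \<in> J" unfolding J_def using t z(1) by simp
      have tm: "t \<notin> m" using my t z(2) by blast
      have "\<one> \<in> J"
      proof (rule ccontr)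
        assume "\<one> \<notin> J"
        hence "J \<in> F" unfolding F_def using Jid Im mJ by blast
        hence "J = m" using mmax mJ by blast
        thus False using tJ tm by simp
      qed
      hence "y \<in> L" unfolding J_def using yc by simp
      hence "cyc R M y \<subseteq> L" using cyc_le[OF Ls] by blast
      thus ?thesis using L by blast
    qed
  qed
  moreover have "cyc R M y \<subseteq> N" using cyc_le[OF N yN] .
  ultimately show ?thesis by blast
qed

lemma contains_all_large: assumes N: "submodule N R M" and all: "\<forall>S\<in>Min_sub R M. S \<subseteq> N"
  shows "large_submodule R M N"
  unfolding large_submodule_def
proof (intro conjI allI impI N)
  fix L assume L: "submodule L R M \<and> L \<noteq> {\<zero>\<^bsub>M\<^esub>}"
  then obtain S where S: "S \<in> Min_sub R M" "S \<subseteq> L" using exists_min by blast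
  have "S \<subseteq> N \<inter> L" using S all by blast
  thus "N \<inter> L \<noteq> {\<zero>\<^bsub>M\<^esub>}" using zero_not[OF minE(1)[OF S(1)] minE(2)[OF S(1)]] by blast
qed

lemma vertex_miss: assumes "N \<in> lsg_vertices R M" shows "\<exists>S\<in>Min_sub R M. \<not> S \<subseteq> N"
proof -
  have N: "submodule N R M" and nl: "\<not> large_submodule R M N" using assms by (simp_all add: lsg_vertices_def)
  then obtain L where L: "submodule L R M" "L \<noteq> {\<zero>\<^bsub>M\<^esub>}" "N \<inter> L = {\<zero>\<^bsub>M\<^esub>}"
    unfolding large_submodule_def by blast
  obtain S where S: "S \<in> Min_sub R M" "S \<subseteq> L" using exists_min[OF L(1,2)] by blast
  have "\<not> S \<subseteq> N"
  proof
    assume "S \<subseteq> N"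
    hence "S \<subseteq> N \<inter> L" using S by blast
    thus False using zero_not[OF minE(1)[OF S(1)] minE(2)[OF S(1)]] L(3) by blast
  qed
  thus ?thesis using S by blast
qed

lemma vertex_has: assumes "N \<in> lsg_vertices R M" shows "\<exists>S\<in>Min_sub R M. S \<subseteq> N"
  using assms exists_min by (simp add: lsg_vertices_def)

lemma min_vertex: assumes S: "S \<in> Min_sub R M" and T: "T \<in> Min_sub R M" and "S \<noteq> T"
  shows "S \<in> lsg_vertices R M"
proof -
  have "\<not> large_submodule R M S" using large_min[OF _ T] min_distinct[OF T S] assms(3) by blast
  thus ?thesis using minE(1,2)[OF S] by (simp add: lsg_vertices_def)
qed

lemma adj_miss: assumes N: "N \<in> lsg_vertices R M" and K: "K \<in> lsg_vertices R M" and "N \<noteq> K"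
  and S: "S \<in> Min_sub R M" and "\<not> S \<subseteq> N" "\<not> S \<subseteq> K"
  shows "lsg_adj R M N K"
proof -
  have Ns: "submodule N R M" and Ks: "submodule K R M" using N K by (simp_all add: lsg_vertices_def)
  have "\<not> S \<subseteq> N <+>\<^bsub>M\<^esub> K" using miss[OF S Ns Ks assms(5,6)] .
  hence "\<not> large_submodule R M (N <+>\<^bsub>M\<^esub> K)" using large_min[OF _ S] by blast
  thus ?thesis using assms(1-3) by (simp add: lsg_adj_def)
qed

lemma three_connected:
  assumes S: "S1 \<in> Min_sub R M" "S2 \<in> Min_sub R M" "S3 \<in> Min_sub R M"
    and d: "S1 \<noteq> S2" "S1 \<noteq> S3" "S2 \<noteq> S3"
  shows "graph_connected (lsg_vertices R M) (lsg_adj R M)"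
  unfolding graph_connected_def
proof (intro ballI)
  let ?E = "{(u, v). lsg_adj R M u v}"
  have edge: "(u, v) \<in> ?E\<^sup>*" if "lsg_adj R M u v" for u v using that by (intro r_into_rtrancl) simp
  fix N K assume N: "N \<in> lsg_vertices R M" and K: "K \<in> lsg_vertices R M"
  show "(N, K) \<in> ?E\<^sup>*"
  proof (cases "N = K")
    case True thus ?thesis by simp
  next
    case NK: False
    obtain Sa where Sa: "Sa \<in> Min_sub R M" "\<not> Sa \<subseteq> N" using vertex_miss[OF N] by blast
    obtain Sb where Sb: "Sb \<in> Min_sub R M" "\<not> Sb \<subseteq> K" using vertex_miss[OF K] by blast
    show ?thesis
    proof (cases "Sa = Sb")
      case True
      thus ?thesis using edge adj_miss[OF N K NK Sa(1) Sa(2)] Sb(2) by blast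
    next
      case ab: False
      obtain Sc where Sc: "Sc \<in> Min_sub R M" "Sc \<noteq> Sa" "Sc \<noteq> Sb" using S d by metis
      have ScV: "Sc \<in> lsg_vertices R M" using min_vertex[OF Sc(1) Sa(1) Sc(2)] .
      have 1: "(N, Sc) \<in> ?E\<^sup>*"
      proof (cases "N = Sc")
        case True thus ?thesis by simp
      next
        case False
        have "\<not> Sa \<subseteq> Sc" using min_distinct[OF Sa(1) Sc(1)] Sc(2) by blast
        thus ?thesis using edge adj_miss[OF N ScV False Sa(1) Sa(2)] by blast
      qed
      have 2: "(Sc, K) \<in> ?E\<^sup>*"
      proof (cases "Sc = K")
        case True thus ?thesis by simp
      next
        case False
        have "\<not> Sb \<subseteq> Sc" using min_distinct[OF Sb(1) Sc(1)] Sc(3) by blast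
        thus ?thesis using edge adj_miss[OF ScV K False Sb(1) _ Sb(2)] by blast
      qed
      show ?thesis using 1 2 by (rule rtrancl_trans)
    qed
  qed
qed

lemma notconn_card:
  assumes V: "lsg_vertices R M \<noteq> {}" and nc: "\<not> graph_connected (lsg_vertices R M) (lsg_adj R M)"
  shows "card (Min_sub R M) = 2"
proof -
  obtain N where N: "N \<in> lsg_vertices R M" using V by blast
  obtain Sa where Sa: "Sa \<in> Min_sub R M" "\<not> Sa \<subseteq> N" using vertex_miss[OF N] by blast
  obtain Sb where Sb: "Sb \<in> Min_sub R M" "Sb \<subseteq> N" using vertex_has[OF N] by blast
  have ab: "Sa \<noteq> Sb" using Sa Sb by blast
  have "Min_sub R M = {Sa, Sb}"
  proof
    show "Min_sub R M \<subseteq> {Sa, Sb}"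
    proof
      fix T assume T: "T \<in> Min_sub R M"
      show "T \<in> {Sa, Sb}"
      proof (rule ccontr)
        assume "T \<notin> {Sa, Sb}"
        hence "graph_connected (lsg_vertices R M) (lsg_adj R M)"
          using three_connected[OF Sa(1) Sb(1) T ab] by blast
        thus False using nc by contradiction
      qed
    qed
    show "{Sa, Sb} \<subseteq> Min_sub R M" using Sa Sb by blast
  qed
  thus ?thesis using ab by simp
qed

lemma card_part:
  assumes c: "card (Min_sub R M) = 2"
  shows "\<exists>V1 V2. V1 \<noteq> {} \<and> V2 \<noteq> {} \<and> V1 \<inter> V2 = {} \<and> V1 \<union> V2 = lsg_vertices R M
           \<and> (\<forall>N \<in> V1. \<forall>K \<in> V1. N \<noteq> K \<longrightarrow> lsg_adj R M N K)
           \<and> (\<forall>N \<in> V2. \<forall>K \<in> V2. N \<noteq> K \<longrightarrow> lsg_adj R M N K)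
           \<and> (\<forall>N \<in> V1. \<forall>K \<in> V2. \<not> lsg_adj R M N K)"
proof -
  obtain S1 S2 where S: "Min_sub R M = {S1, S2}" "S1 \<noteq> S2" using c card_2_iff by metis
  have S1: "S1 \<in> Min_sub R M" and S2: "S2 \<in> Min_sub R M" using S by auto
  define V1 where "V1 = {N \<in> lsg_vertices R M. S2 \<subseteq> N}"
  define V2 where "V2 = {N \<in> lsg_vertices R M. S1 \<subseteq> N}"
  have both: "\<not> (S1 \<subseteq> N \<and> S2 \<subseteq> N)" if N: "N \<in> lsg_vertices R M" for N
  proof
    assume "S1 \<subseteq> N \<and> S2 \<subseteq> N"
    hence "large_submodule R M N" using contains_all_large[of N] N S(1) by (simp add: lsg_vertices_def)
    thus False using N by (simp add: lsg_vertices_def)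
  qed
  have "V1 \<noteq> {}" unfolding V1_def using min_vertex[OF S2 S1] S(2) by blast
  moreover have "V2 \<noteq> {}" unfolding V2_def using min_vertex[OF S1 S2 S(2)] by blast
  moreover have "V1 \<inter> V2 = {}" unfolding V1_def V2_def using both by blast
  moreover have "V1 \<union> V2 = lsg_vertices R M"
  proof
    show "V1 \<union> V2 \<subseteq> lsg_vertices R M" unfolding V1_def V2_def by blast
    show "lsg_vertices R M \<subseteq> V1 \<union> V2"
    proof
      fix N assume N: "N \<in> lsg_vertices R M"
      obtain T where "T \<in> Min_sub R M" "T \<subseteq> N" using vertex_has[OF N] by blast
      thus "N \<in> V1 \<union> V2" using N S(1) unfolding V1_def V2_def by blast
    qed
  qed
  moreover have "\<forall>N \<in> V1. \<forall>K \<in> V1. N \<noteq> K \<longrightarrow> lsg_adj R M N K"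
  proof (intro ballI impI)
    fix N K assume N: "N \<in> V1" and K: "K \<in> V1" and NK: "N \<noteq> K"
    have NV: "N \<in> lsg_vertices R M" and KV: "K \<in> lsg_vertices R M" using N K by (simp_all add: V1_def)
    have "\<not> S1 \<subseteq> N" "\<not> S1 \<subseteq> K" using both[OF NV] both[OF KV] N K by (simp_all add: V1_def)
    thus "lsg_adj R M N K" using adj_miss[OF NV KV NK S1] by blast
  qed
  moreover have "\<forall>N \<in> V2. \<forall>K \<in> V2. N \<noteq> K \<longrightarrow> lsg_adj R M N K"
  proof (intro ballI impI)
    fix N K assume N: "N \<in> V2" and K: "K \<in> V2" and NK: "N \<noteq> K"
    have NV: "N \<in> lsg_vertices R M" and KV: "K \<in> lsg_vertices R M" using N K by (simp_all add: V2_def)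
    have "\<not> S2 \<subseteq> N" "\<not> S2 \<subseteq> K" using both[OF NV] both[OF KV] N K by (simp_all add: V2_def)
    thus "lsg_adj R M N K" using adj_miss[OF NV KV NK S2] by blast
  qed
  moreover have "\<forall>N \<in> V1. \<forall>K \<in> V2. \<not> lsg_adj R M N K"
  proof (intro ballI notI)
    fix N K assume N: "N \<in> V1" and K: "K \<in> V2" and adj: "lsg_adj R M N K"
    have Ns: "submodule N R M" and Ks: "submodule K R M" using N K by (simp_all add: V1_def V2_def lsg_vertices_def)
    have "S2 \<subseteq> N <+>\<^bsub>M\<^esub> K" using N sub_add_le1[OF Ns Ks] by (auto simp: V1_def)
    moreover have "S1 \<subseteq> N <+>\<^bsub>M\<^esub> K" using K sub_add_le2[OF Ns Ks] by (auto simp: V2_def)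
    ultimately have "large_submodule R M (N <+>\<^bsub>M\<^esub> K)"
      using contains_all_large[OF sub_add[OF Ns Ks]] S(1) by simp
    thus False using adj by (simp add: lsg_adj_def)
  qed
  ultimately show ?thesis by blast
qed

end

lemma part_notconn:
  assumes "V1 \<noteq> {}" "V2 \<noteq> {}" "V1 \<inter> V2 = {}" "V1 \<union> V2 = V"
    and adjV: "\<And>u v. E u v \<Longrightarrow> v \<in> V"
    and no: "\<forall>N \<in> V1. \<forall>K \<in> V2. \<not> E N K"
  shows "\<not> graph_connected V E"
proof
  assume c: "graph_connected V E"
  obtain x y where x: "x \<in> V1" and y: "y \<in> V2" using assms(1,2) by blast
  have "(x, y) \<in> {(u, v). E u v}\<^sup>*" using c x y assms(4) unfolding graph_connected_def by blast
  hence "y \<in> V1"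
  proof (induction rule: rtrancl_induct)
    case base thus ?case using x .
  next
    case (step u v)
    hence "E u v" by simp
    hence "v \<in> V" using adjV by blast
    moreover have "v \<notin> V2" using no step.IH \<open>E u v\<close> by blast
    ultimately show ?case using assms(4) by blast
  qed
  thus False using y assms(3) by blast
qed


theorem theorem2p6:
  fixes R :: "('a, 'c) ring_scheme" and M :: "('a, 'b, 'd) module_scheme"
  assumes "cring R"
    and "module R M"
    and "carrier M \<noteq> {\<zero>\<^bsub>M\<^esub>}"
    and "comultiplication_module R M"
    and "lsg_vertices R M \<noteq> {}"
  shows "(\<not> graph_connected (lsg_vertices R M) (lsg_adj R M) \<longleftrightarrow> card (Min_sub R M) = 2)
    \<and> (card (Min_sub R M) = 2 \<longleftrightarrow>
        (\<exists>V1 V2. V1 \<noteq> {} \<and> V2 \<noteq> {} \<and> V1 \<inter> V2 = {} \<and> V1 \<union> V2 = lsg_vertices R M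
           \<and> (\<forall>N \<in> V1. \<forall>K \<in> V1. N \<noteq> K \<longrightarrow> lsg_adj R M N K)
           \<and> (\<forall>N \<in> V2. \<forall>K \<in> V2. N \<noteq> K \<longrightarrow> lsg_adj R M N K)
           \<and> (\<forall>N \<in> V1. \<forall>K \<in> V2. \<not> lsg_adj R M N K)))"
proof -
  interpret comod R M by (intro comod.intro comod_axioms.intro assms(2,4))
  have adjV: "\<And>u v. lsg_adj R M u v \<Longrightarrow> v \<in> lsg_vertices R M" by (simp add: lsg_adj_def)
  have P2: "\<not> graph_connected (lsg_vertices R M) (lsg_adj R M)"
    if "\<exists>V1 V2. V1 \<noteq> {} \<and> V2 \<noteq> {} \<and> V1 \<inter> V2 = {} \<and> V1 \<union> V2 = lsg_vertices R M
           \<and> (\<forall>N \<in> V1. \<forall>K \<in> V1. N \<noteq> K \<longrightarrow> lsg_adj R M N K)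
           \<and> (\<forall>N \<in> V2. \<forall>K \<in> V2. N \<noteq> K \<longrightarrow> lsg_adj R M N K)
           \<and> (\<forall>N \<in> V1. \<forall>K \<in> V2. \<not> lsg_adj R M N K)" (is ?PP)
  proof -
    from that obtain V1 where "\<exists>V2. V1 \<noteq> {} \<and> V2 \<noteq> {} \<and> V1 \<inter> V2 = {} \<and> V1 \<union> V2 = lsg_vertices R M
           \<and> (\<forall>N \<in> V1. \<forall>K \<in> V1. N \<noteq> K \<longrightarrow> lsg_adj R M N K)
           \<and> (\<forall>N \<in> V2. \<forall>K \<in> V2. N \<noteq> K \<longrightarrow> lsg_adj R M N K)
           \<and> (\<forall>N \<in> V1. \<forall>K \<in> V2. \<not> lsg_adj R M N K)" by (rule exE)
    then obtain V2 where H: "V1 \<noteq> {} \<and> V2 \<noteq> {} \<and> V1 \<inter> V2 = {} \<and> V1 \<union> V2 = lsg_vertices R M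
           \<and> (\<forall>N \<in> V1. \<forall>K \<in> V1. N \<noteq> K \<longrightarrow> lsg_adj R M N K)
           \<and> (\<forall>N \<in> V2. \<forall>K \<in> V2. N \<noteq> K \<longrightarrow> lsg_adj R M N K)
           \<and> (\<forall>N \<in> V1. \<forall>K \<in> V2. \<not> lsg_adj R M N K)" by (rule exE)
    from H have V: "V1 \<noteq> {}" "V2 \<noteq> {}" "V1 \<inter> V2 = {}" "V1 \<union> V2 = lsg_vertices R M"
      "\<forall>N \<in> V1. \<forall>K \<in> V2. \<not> lsg_adj R M N K" by simp_all
    show ?thesis by (rule part_notconn[of V1 V2 "lsg_vertices R M" "lsg_adj R M", OF V(1-4) adjV V(5)])
  qed
  show ?thesis
  proof (intro conjI iffI)
    assume "\<not> graph_connected (lsg_vertices R M) (lsg_adj R M)"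
    thus "card (Min_sub R M) = 2" by (rule notconn_card[OF assms(5)])
  next
    assume "card (Min_sub R M) = 2"
    hence ex: ?PP by (rule card_part)
    show "\<not> graph_connected (lsg_vertices R M) (lsg_adj R M)" using P2[OF ex] .
  next
    assume "card (Min_sub R M) = 2"
    thus ?PP by (rule card_part)
  next
    assume ex: ?PP
    show "card (Min_sub R M) = 2" by (rule notconn_card[OF assms(5) P2[OF ex]])
  qed
qed

end
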